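(* Let $p$ and $q$ be groupoid terms in a set of variables $X$. Then, with each $n_x$ denoting a suitable integer: (i) $p=q$ is in $\Sigma_{1,2,3}$ iff $[p]-[q]=\sum_{x\in X} n_x(\alpha+\beta-\gamma-1)x$ for some integers $n_x$; (ii) $p=q$ is in $\Sigma_{1,2,4}$ iff $[p]-[q]=\sum_{x\in X} n_x(\alpha-\beta+\gamma-1)x$ for some integers $n_x$; (iii) $p=q$ is in $\Sigma_{2,3,4}$ iff $[p]-[q]=\sum_{x\in X} n_x(\alpha+\beta+\gamma+1)x$ for some integers $n_x$.
   Context: Let $f_1(x,y)=x+y$, $f_2(x,y)=x-y$, $f_3(x,y)=-x+y$, $f_4(x,y)=-x-y$ on the integers $\mathbb{Z}$. For $K\subseteq\{1,2,3,4\}$, $\Sigma_K$ (written e.g. $\Sigma_{1,2,3}$) is the set of groupoid identities satisfied in $\mathbb{Z}$ by the operation $f_k$ for every $k\in K$. Let $\mathbf{KL}=\{1,\alpha,\beta,\gamma\}$ be the Klein 4-group ($\alpha^2=\beta^2=1$, $\alpha\beta=\gamma$). For a term $p$ in variables $X$, $[p]$ denotes the element of the free $\mathbb{Z}[\mathbf{KL}]$-module on $X$ obtained by evaluating $p$ with the product $uv$ interpreted as $\alpha u+\beta v$; thus $[p]=\sum_{x\in X} a_x x$ with $a_x\in\mathbb{N}[\mathbf{KL}]$. *)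

theory Defs
  imports Main
begin

datatype 'v gterm = Var 'v | Op "'v gterm" "'v gterm"

fun fop :: "nat \<Rightarrow> int \<Rightarrow> int \<Rightarrow> int" where
  "fop k x y = (if k = 1 then x + y else if k = 2 then x - y
                else if k = 3 then - x + y else - x - y)"

fun geval :: "nat \<Rightarrow> ('v \<Rightarrow> int) \<Rightarrow> 'v gterm \<Rightarrow> int" where
  "geval k e (Var x) = e x"
| "geval k e (Op p q) = fop k (geval k e p) (geval k e q)"

definition Sigma :: "nat set \<Rightarrow> ('v gterm \<times> 'v gterm) set" where
  "Sigma K = {(p, q). \<forall>k\<in>K. \<forall>e. geval k e p = geval k e q}"

datatype kl = One | Alpha | Beta | Gamma

fun klmul :: "kl \<Rightarrow> kl \<Rightarrow> kl" where
  "klmul One g = g"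
| "klmul g One = g"
| "klmul Alpha Alpha = One"
| "klmul Beta Beta = One"
| "klmul Gamma Gamma = One"
| "klmul Alpha Beta = Gamma"
| "klmul Beta Alpha = Gamma"
| "klmul Alpha Gamma = Beta"
| "klmul Gamma Alpha = Beta"
| "klmul Beta Gamma = Alpha"
| "klmul Gamma Beta = Alpha"

text \<open>Elements of Z[KL] are coefficient functions kl => int. Product (convolution);
  every group element is its own inverse, so (a*b)(g) = sum_h a(h) b(h g).\<close>
definition grmul :: "(kl \<Rightarrow> int) \<Rightarrow> (kl \<Rightarrow> int) \<Rightarrow> (kl \<Rightarrow> int)" where
  "grmul a b = (\<lambda>g. \<Sum>h\<in>{One, Alpha, Beta, Gamma}. a h * b (klmul h g))"

definition grbasis :: "kl \<Rightarrow> (kl \<Rightarrow> int)" where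
  "grbasis h = (\<lambda>g. if g = h then 1 else 0)"

text \<open>[p], an element of the free Z[KL]-module on the variables, given as the
  coefficient map x |-> a_x.  Product uv is interpreted as alpha u + beta v.\<close>
fun brk :: "'v gterm \<Rightarrow> 'v \<Rightarrow> (kl \<Rightarrow> int)" where
  "brk (Var y) = (\<lambda>x. if x = y then grbasis One else (\<lambda>g. 0))"
| "brk (Op p q) = (\<lambda>x g. grmul (grbasis Alpha) (brk p x) g + grmul (grbasis Beta) (brk q x) g)"

end

theory Submission
  imports Defs
begin

fun vars :: "'v gterm \<Rightarrow> 'v set" where
  "vars (Var y) = {y}"
| "vars (Op p q) = vars p \<union> vars q"

lemma finite_vars: "finite (vars p)"
  by (induction p) auto

definition sA :: "nat \<Rightarrow> int" where "sA k = (if k = 1 \<or> k = 2 then 1 else -1)"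
definition sB :: "nat \<Rightarrow> int" where "sB k = (if k = 1 \<or> k = 3 then 1 else -1)"

definition ch :: "nat \<Rightarrow> (kl \<Rightarrow> int) \<Rightarrow> int" where
  "ch k a = a One + sA k * a Alpha + sB k * a Beta + sA k * sB k * a Gamma"

lemma fop_lin: "fop k x y = sA k * x + sB k * y"
  by (simp add: sA_def sB_def)

lemma grmul_basis: "grmul (grbasis h) b g = b (klmul h g)"
  by (cases h; cases g; simp add: grmul_def grbasis_def)

lemma sA_sq: "sA k * sA k = 1" by (simp add: sA_def)
lemma sB_sq: "sB k * sB k = 1" by (simp add: sB_def)

lemma ch_alpha: "ch k (\<lambda>g. b (klmul Alpha g)) = sA k * ch k b"
proof -
  have "ch k (\<lambda>g. b (klmul Alpha g)) = b Alpha + sA k * b One + sB k * b Gamma + sA k * sB k * b Beta"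
    by (simp add: ch_def)
  also have "\<dots> = sA k * ch k b"
    by (simp add: ch_def algebra_simps sA_sq
        flip: mult.assoc[of "sA k" "sA k"])
  finally show ?thesis .
qed

lemma ch_beta: "ch k (\<lambda>g. b (klmul Beta g)) = sB k * ch k b"
proof -
  have "ch k (\<lambda>g. b (klmul Beta g)) = b Beta + sA k * b Gamma + sB k * b One + sA k * sB k * b Alpha"
    by (simp add: ch_def)
  also have "\<dots> = sB k * ch k b"
    by (simp add: ch_def algebra_simps sB_sq
        flip: mult.assoc[of "sB k" "sB k"])
  finally show ?thesis .
qed

lemma ch_add: "ch k (\<lambda>g. a g + b g) = ch k a + ch k b"
  by (simp add: ch_def algebra_simps)

lemma geval_sum:
  "finite V \<Longrightarrow> vars p \<subseteq> V \<Longrightarrow> geval k e p = (\<Sum>x\<in>V. e x * ch k (brk p x))"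
proof (induction p)
  case (Var y)
  then have yV: "y \<in> V" by simp
  have "(\<Sum>x\<in>V. e x * ch k (brk (Var y) x)) = (\<Sum>x\<in>V. if x = y then e x else 0)"
    by (rule sum.cong) (auto simp: ch_def grbasis_def)
  also have "\<dots> = e y" using Var yV by simp
  finally show ?case by simp
next
  case (Op p q)
  have "geval k e (Op p q) = sA k * geval k e p + sB k * geval k e q"
    by (simp only: geval.simps fop_lin)
  also have "\<dots> = sA k * (\<Sum>x\<in>V. e x * ch k (brk p x)) + sB k * (\<Sum>x\<in>V. e x * ch k (brk q x))"
    using Op by simp
  also have "\<dots> = (\<Sum>x\<in>V. e x * ch k (brk (Op p q) x))"
    by (simp add: sum_distrib_left sum.distrib[symmetric] grmul_basis ch_add ch_alpha ch_beta algebra_simps)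
  finally show ?case .
qed

lemma sigma_k:
  "(\<forall>e. geval k e p = geval k e q) \<longleftrightarrow> (\<forall>x. ch k (brk p x) = ch k (brk q x))"
proof
  assume H: "\<forall>e. geval k e p = geval k e q"
  show "\<forall>x. ch k (brk p x) = ch k (brk q x)"
  proof
    fix x
    define V where "V = insert x (vars p \<union> vars q)"
    have fV: "finite V" unfolding V_def using finite_vars by auto
    define e :: "_ \<Rightarrow> int" where "e = (\<lambda>y. if y = x then 1 else 0)"
    have xV: "x \<in> V" unfolding V_def by simp
    have "\<And>r. vars r \<subseteq> V \<Longrightarrow> geval k e r = ch k (brk r x)"
    proof -
      fix r assume "vars r \<subseteq> V"
      then have "geval k e r = (\<Sum>y\<in>V. e y * ch k (brk r y))" using geval_sum fV by blast
      also have "\<dots> = (\<Sum>y\<in>V. if y = x then ch k (brk r y) else 0)"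
        by (rule sum.cong) (auto simp: e_def)
      also have "\<dots> = ch k (brk r x)" using fV xV by simp
      finally show "geval k e r = ch k (brk r x)" .
    qed
    moreover have "vars p \<subseteq> V" "vars q \<subseteq> V" unfolding V_def by auto
    ultimately show "ch k (brk p x) = ch k (brk q x)" using H by metis
  qed
next
  assume H: "\<forall>x. ch k (brk p x) = ch k (brk q x)"
  show "\<forall>e. geval k e p = geval k e q"
  proof
    fix e
    define V where "V = vars p \<union> vars q"
    have fV: "finite V" unfolding V_def using finite_vars by auto
    have "geval k e p = (\<Sum>x\<in>V. e x * ch k (brk p x))" using geval_sum fV V_def by blast
    also have "\<dots> = (\<Sum>x\<in>V. e x * ch k (brk q x))" using H by simp
    also have "\<dots> = geval k e q" using geval_sum fV V_def by (metis sup_ge2)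
    finally show "geval k e p = geval k e q" .
  qed
qed

lemma sigma_char: "(p, q) \<in> Sigma (K::nat set) \<longleftrightarrow> (\<forall>k\<in>K. \<forall>x. ch k (brk p x) = ch k (brk q x))"
  unfolding Sigma_def by (simp add: sigma_k)

lemma alg1:
  fixes A B :: "'v \<Rightarrow> kl \<Rightarrow> int"
  shows "(\<forall>k::nat\<in>{1,2,3}. \<forall>x. ch k (A x) = ch k (B x)) \<longleftrightarrow>
    (\<exists>n :: 'v \<Rightarrow> int. \<forall>x g. A x g - B x g = n x * (grbasis Alpha g + grbasis Beta g - grbasis Gamma g - grbasis One g))"
proof
  assume H: "\<forall>k\<in>{1,2,3}. \<forall>x. ch k (A x) = ch k (B x)"
  show "\<exists>n :: 'v \<Rightarrow> int. \<forall>x g. A x g - B x g = n x * (grbasis Alpha g + grbasis Beta g - grbasis Gamma g - grbasis One g)"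
  proof (intro exI allI)
    fix x g
    have e: "ch k (A x) = ch k (B x)" if "(k::nat) \<in> {1,2,3}" for k using H that by blast
    from e[of 1] e[of 2] e[of 3]
    show "A x g - B x g = (B x One - A x One) * (grbasis Alpha g + grbasis Beta g - grbasis Gamma g - grbasis One g)"
      by (cases g) (simp_all add: ch_def sA_def sB_def grbasis_def algebra_simps)
  qed
next
  assume "\<exists>n :: 'v \<Rightarrow> int. \<forall>x g. A x g - B x g = n x * (grbasis Alpha g + grbasis Beta g - grbasis Gamma g - grbasis One g)"
  then obtain n :: "'v \<Rightarrow> int" where n: "\<And>x g. A x g - B x g = n x * (grbasis Alpha g + grbasis Beta g - grbasis Gamma g - grbasis One g)" by blast
  show "\<forall>k\<in>{1,2,3}. \<forall>x. ch k (A x) = ch k (B x)"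
  proof (intro ballI allI)
    fix k :: nat and x assume "k \<in> {1,2,3}"
    then show "ch k (A x) = ch k (B x)"
      using n[of x One] n[of x Alpha] n[of x Beta] n[of x Gamma]
      by (auto simp: ch_def sA_def sB_def grbasis_def algebra_simps)
  qed
qed

lemma alg2:
  fixes A B :: "'v \<Rightarrow> kl \<Rightarrow> int"
  shows "(\<forall>k::nat\<in>{1,2,4}. \<forall>x. ch k (A x) = ch k (B x)) \<longleftrightarrow>
    (\<exists>n :: 'v \<Rightarrow> int. \<forall>x g. A x g - B x g = n x * (grbasis Alpha g - grbasis Beta g + grbasis Gamma g - grbasis One g))"
proof
  assume H: "\<forall>k\<in>{1,2,4}. \<forall>x. ch k (A x) = ch k (B x)"
  show "\<exists>n :: 'v \<Rightarrow> int. \<forall>x g. A x g - B x g = n x * (grbasis Alpha g - grbasis Beta g + grbasis Gamma g - grbasis One g)"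
  proof (intro exI allI)
    fix x g
    have e: "ch k (A x) = ch k (B x)" if "(k::nat) \<in> {1,2,4}" for k using H that by blast
    from e[of 1] e[of 2] e[of 4]
    show "A x g - B x g = (B x One - A x One) * (grbasis Alpha g - grbasis Beta g + grbasis Gamma g - grbasis One g)"
      by (cases g) (simp_all add: ch_def sA_def sB_def grbasis_def algebra_simps)
  qed
next
  assume "\<exists>n :: 'v \<Rightarrow> int. \<forall>x g. A x g - B x g = n x * (grbasis Alpha g - grbasis Beta g + grbasis Gamma g - grbasis One g)"
  then obtain n :: "'v \<Rightarrow> int" where n: "\<And>x g. A x g - B x g = n x * (grbasis Alpha g - grbasis Beta g + grbasis Gamma g - grbasis One g)" by blast
  show "\<forall>k\<in>{1,2,4}. \<forall>x. ch k (A x) = ch k (B x)"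
  proof (intro ballI allI)
    fix k :: nat and x assume "k \<in> {1,2,4}"
    then show "ch k (A x) = ch k (B x)"
      using n[of x One] n[of x Alpha] n[of x Beta] n[of x Gamma]
      by (auto simp: ch_def sA_def sB_def grbasis_def algebra_simps)
  qed
qed

lemma alg3:
  fixes A B :: "'v \<Rightarrow> kl \<Rightarrow> int"
  shows "(\<forall>k::nat\<in>{2,3,4}. \<forall>x. ch k (A x) = ch k (B x)) \<longleftrightarrow>
    (\<exists>n :: 'v \<Rightarrow> int. \<forall>x g. A x g - B x g = n x * (grbasis Alpha g + grbasis Beta g + grbasis Gamma g + grbasis One g))"
proof
  assume H: "\<forall>k\<in>{2,3,4}. \<forall>x. ch k (A x) = ch k (B x)"
  show "\<exists>n :: 'v \<Rightarrow> int. \<forall>x g. A x g - B x g = n x * (grbasis Alpha g + grbasis Beta g + grbasis Gamma g + grbasis One g)"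
  proof (intro exI allI)
    fix x g
    have e: "ch k (A x) = ch k (B x)" if "(k::nat) \<in> {2,3,4}" for k using H that by blast
    from e[of 2] e[of 3] e[of 4]
    show "A x g - B x g = (A x One - B x One) * (grbasis Alpha g + grbasis Beta g + grbasis Gamma g + grbasis One g)"
      by (cases g) (simp_all add: ch_def sA_def sB_def grbasis_def algebra_simps)
  qed
next
  assume "\<exists>n :: 'v \<Rightarrow> int. \<forall>x g. A x g - B x g = n x * (grbasis Alpha g + grbasis Beta g + grbasis Gamma g + grbasis One g)"
  then obtain n :: "'v \<Rightarrow> int" where n: "\<And>x g. A x g - B x g = n x * (grbasis Alpha g + grbasis Beta g + grbasis Gamma g + grbasis One g)" by blast
  show "\<forall>k\<in>{2,3,4}. \<forall>x. ch k (A x) = ch k (B x)"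
  proof (intro ballI allI)
    fix k :: nat and x assume "k \<in> {2,3,4}"
    then show "ch k (A x) = ch k (B x)"
      using n[of x One] n[of x Alpha] n[of x Beta] n[of x Gamma]
      by (auto simp: ch_def sA_def sB_def grbasis_def algebra_simps)
  qed
qed

theorem lemma2p1:
  fixes p q :: "'v gterm"
  shows "((p, q) \<in> Sigma {1, 2, 3} \<longleftrightarrow>
           (\<exists>n :: 'v \<Rightarrow> int. \<forall>x g. brk p x g - brk q x g =
              n x * (grbasis Alpha g + grbasis Beta g - grbasis Gamma g - grbasis One g)))
       \<and> ((p, q) \<in> Sigma {1, 2, 4} \<longleftrightarrow>
           (\<exists>n :: 'v \<Rightarrow> int. \<forall>x g. brk p x g - brk q x g =
              n x * (grbasis Alpha g - grbasis Beta g + grbasis Gamma g - grbasis One g)))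
       \<and> ((p, q) \<in> Sigma {2, 3, 4} \<longleftrightarrow>
           (\<exists>n :: 'v \<Rightarrow> int. \<forall>x g. brk p x g - brk q x g =
              n x * (grbasis Alpha g + grbasis Beta g + grbasis Gamma g + grbasis One g)))"
proof -
  show ?thesis unfolding sigma_char
    using alg1[of "brk p" "brk q"] alg2[of "brk p" "brk q"] alg3[of "brk p" "brk q"] by blast
qed

end
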